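(* For every Johnson graph $J(m,k)$ (with $m,k\in\mathbb N$, $k\le m$), the VC-dimension of the edge relation on $J(m,k)$ is at most $4$.
   Context: For $m\ge k$ and a set $X$ with $|X|=m$, the Johnson graph $J(m,k)$ has as vertices the $k$-element subsets of $X$, two vertices adjacent iff their intersection has size $k-1$. The VC-dimension of the edge relation on a graph $G$ is the VC-dimension of the set system $(V(G),\{N(v)\mid v\in V(G)\})$, where $N(v)$ is the set of vertices adjacent to $v$; i.e. the largest size of a set $A\subseteq V(G)$ such that $\{A\cap N(v)\mid v\in V(G)\}$ equals the power set of $A$. *)

theory Defs
  imports Main "HOL-Library.Extended_Nat"
begin

definition nbhd :: "'v set \<Rightarrow> ('v \<Rightarrow> 'v \<Rightarrow> bool) \<Rightarrow> 'v \<Rightarrow> 'v set" where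
  "nbhd V E v = {u \<in> V. E v u}"

definition shatters :: "'v set set \<Rightarrow> 'v set \<Rightarrow> bool" where
  "shatters F A \<longleftrightarrow> {A \<inter> S | S. S \<in> F} = Pow A"

definition vc_dim :: "'v set \<Rightarrow> 'v set set \<Rightarrow> enat" where
  "vc_dim V F = Sup {enat (card A) | A. A \<subseteq> V \<and> finite A \<and> shatters F A}"

definition edge_vc_dim :: "'v set \<Rightarrow> ('v \<Rightarrow> 'v \<Rightarrow> bool) \<Rightarrow> enat" where
  "edge_vc_dim V E = vc_dim V (nbhd V E ` V)"

text \<open>Johnson graph J(X,k): vertices are the k-subsets of X, adjacent iff they meet in k-1 elements.
  (Written as card + 1 = k to avoid truncated subtraction on nat.)\<close>
definition johnson_vertices :: "'a set \<Rightarrow> nat \<Rightarrow> 'a set set" where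
  "johnson_vertices X k = {A. A \<subseteq> X \<and> card A = k}"

definition johnson_adj :: "nat \<Rightarrow> 'a set \<Rightarrow> 'a set \<Rightarrow> bool" where
  "johnson_adj k A B \<longleftrightarrow> card (A \<inter> B) + 1 = k"

end

theory Submission imports Defs begin

lemma diff_single: "A - B = {a} \<longleftrightarrow> (\<forall>y. (y \<in> A \<and> y \<notin> B) \<longleftrightarrow> y = a)" by (simp add: set_eq_iff)


lemma diff_sym:
  assumes "finite u" "finite w" "card u = card w"
  shows "card (u - w) = card (w - u)"
  using card_le_sym_Diff assms by (metis le_antisym order_refl)

lemma adj_iff:
  assumes "finite u" "finite w" "card u = k" "card w = k"
  shows "johnson_adj k w u \<longleftrightarrow> card (u - w) = 1"
proof -
  have "card (u - w) = card u - card (u \<inter> w)" using assms by (simp add: card_Diff_subset_Int)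
  moreover have "card (u \<inter> w) \<le> card u" using assms(1) by (simp add: card_mono)
  moreover have "card (w \<inter> u) = card (u \<inter> w)" by (simp add: Int_commute)
  ultimately show ?thesis unfolding johnson_adj_def using assms by linarith
qed

lemma rep:
  assumes "finite B" "finite v" "card B = card v" "card (B - v) = 1"
  shows "\<exists>a\<in>v. \<exists>b. b \<notin> v \<and> B = insert b (v - {a})"
proof -
  have "card (v - B) = 1" using diff_sym assms by metis
  then obtain a where a: "v - B = {a}" by (rule card_1_singletonE)
  obtain b where b: "B - v = {b}" using assms(4) by (rule card_1_singletonE)
  have "a \<in> v" "b \<notin> v" using a b unfolding diff_single by metis+
  moreover have "B = insert b (v - {a})" using a b unfolding diff_single set_eq_iff by auto
  ultimately show ?thesis by blast
qed

lemma common_nb: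
  assumes "finite u" "finite x" "finite w" "card (u - x) = 2" "card (x - u) = 2"
    "card (u - w) = 1" "card (w - u) = 1" "card (w - x) = 1" "card (x - w) = 1"
  shows "\<exists>a\<in>u - x. \<exists>b\<in>x - u. w = insert b (u - {a})"
proof -
  obtain a where a: "u - w = {a}" using assms(6) by (rule card_1_singletonE)
  obtain b where b: "w - u = {b}" using assms(7) by (rule card_1_singletonE)
  obtain p where p: "w - x = {p}" using assms(8) by (rule card_1_singletonE)
  obtain q where q: "x - w = {q}" using assms(9) by (rule card_1_singletonE)
  have "a \<in> u - x"
  proof (rule ccontr)
    assume na: "a \<notin> u - x"
    have "u - x \<subseteq> {p}" using na a p unfolding diff_single by (metis Diff_iff singletonI subsetI)
    then have "card (u - x) \<le> 1" using card_mono[of "{p}" "u - x"] by simp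
    then show False using assms(4) by simp
  qed
  moreover have "b \<in> x - u"
  proof (rule ccontr)
    assume nb: "b \<notin> x - u"
    have "x - u \<subseteq> {q}" using nb b q unfolding diff_single by (metis Diff_iff singletonI subsetI)
    then have "card (x - u) \<le> 1" using card_mono[of "{q}" "x - u"] by simp
    then show False using assms(5) by simp
  qed
  moreover have "w = insert b (u - {a})" using a b unfolding diff_single set_eq_iff by auto
  ultimately show ?thesis by blast
qed

lemma sub_single_card:
  assumes "finite S" "S - w \<subseteq> {x}" "card (S - w) \<noteq> 1"
  shows "S \<subseteq> w"
proof -
  have "S - w = {} \<or> S - w = {x}" using assms(2) by (simp add: subset_singleton_iff)
  then show ?thesis using assms(3) by auto
qed

lemma caseA:
  fixes v w :: "'a set"
  assumes fv: "finite v" and a0: "a0 \<in> v" and b: "b1 \<notin> v" "b2 \<notin> v" "b3 \<notin> v" "b4 \<notin> v"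
    and d: "b1 \<noteq> b2" "b1 \<noteq> b3" "b2 \<noteq> b3" and fw: "finite w" and cw: "card w = card v"
    and h1: "card (insert b1 (v - {a0}) - w) = 1"
    and h2: "card (insert b2 (v - {a0}) - w) = 1"
    and h3: "card (insert b3 (v - {a0}) - w) = 1"
  shows "card (insert b4 (v - {a0}) - w) = 1 \<or> insert b4 (v - {a0}) = w"
proof -
  define c where "c = v - {a0}"
  have fc: "finite c" using fv c_def by simp
  have cc: "card c = card v - 1" using fv a0 c_def by simp
  have cv1: "card v \<ge> 1" using fv a0 by (metis One_nat_def Suc_leI card_gt_0_iff empty_iff)
  have sub: "c \<subseteq> w"
  proof (rule ccontr)
    assume "\<not> c \<subseteq> w"
    then obtain t where t: "t \<in> c" "t \<notin> w" by blast
    have tv: "t \<in> v" "t \<noteq> a0" using t c_def by auto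
    have key: "b \<in> w \<and> c - {t} \<subseteq> w" if bn: "b \<notin> v" and hb: "card (insert b c - w) = 1" for b
    proof -
      obtain z where z: "insert b c - w = {z}" using hb by (rule card_1_singletonE)
      have "t \<in> insert b c - w" using t by simp
      then have zt: "z = t" using z by simp
      have "b \<noteq> t" using bn tv by auto
      then have "b \<in> w" using z zt unfolding diff_single by auto
      moreover have "c - {t} \<subseteq> w" using z zt unfolding diff_single by auto
      ultimately show ?thesis by blast
    qed
    have "(c - {t}) \<union> {b1, b2, b3} \<subseteq> w" using key[OF b(1) h1[folded c_def]] key[OF b(2) h2[folded c_def]] key[OF b(3) h3[folded c_def]] by blast
    then have le: "card ((c - {t}) \<union> {b1, b2, b3}) \<le> card w" using fw by (rule card_mono[rotated])
    have disj: "(c - {t}) \<inter> {b1, b2, b3} = {}" using b c_def by auto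
    have "card ((c - {t}) \<union> {b1, b2, b3}) = card (c - {t}) + card {b1, b2, b3}"
      using card_Un_disjoint[of "c - {t}" "{b1, b2, b3}"] disj fc by blast
    also have "card {b1, b2, b3} = 3" using d by simp
    also have "card (c - {t}) = card v - 2" using cc t fc by simp
    finally have "card ((c - {t}) \<union> {b1, b2, b3}) = card v - 2 + 3" .
    moreover have "card v \<ge> 2"
    proof -
      have "{a0, t} \<subseteq> v" using a0 tv by simp
      then have "card {a0, t} \<le> card v" using fv card_mono by blast
      then show ?thesis using tv by simp
    qed
    ultimately show False using le cw by simp
  qed
  show ?thesis
  proof (cases "card (insert b4 c - w) = 1")
    case True then show ?thesis using c_def by simp
  next
    case False
    have "insert b4 c - w \<subseteq> {b4}" using sub by blast
    then have s: "insert b4 c \<subseteq> w" using False fc sub_single_card by (metis finite_insert)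
    have "card (insert b4 c) = card v" using b(4) c_def cc cv1 fc by simp
    then have "insert b4 c = w" using card_subset_eq[OF fw s] cw by simp
    then show ?thesis using c_def by simp
  qed
qed

lemma caseB:
  fixes v w :: "'a set"
  assumes fv: "finite v" and b0: "b0 \<notin> v" and a: "a1 \<in> v" "a2 \<in> v" "a3 \<in> v" "a4 \<in> v"
    and d: "a1 \<noteq> a2" "a1 \<noteq> a3" "a2 \<noteq> a3" and fw: "finite w" and cw: "card w = card v"
    and h1: "card (insert b0 (v - {a1}) - w) = 1"
    and h2: "card (insert b0 (v - {a2}) - w) = 1"
    and h3: "card (insert b0 (v - {a3}) - w) = 1"
  shows "card (insert b0 (v - {a4}) - w) = 1 \<or> insert b0 (v - {a4}) = w"
proof -
  define D where "D = insert b0 v"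
  have fD: "finite D" using fv D_def by simp
  have cD: "card D = card v + 1" using fv b0 D_def by simp
  have Ai: "insert b0 (v - {a}) = D - {a}" if "a \<in> v" for a using that b0 D_def by auto
  have cAi: "card (D - {a}) = card v" if "a \<in> v" for a using that fD cD D_def by simp
  have sub: "w \<subseteq> D"
  proof (rule ccontr)
    assume "\<not> w \<subseteq> D"
    then obtain t where t: "t \<in> w" "t \<notin> D" by blast
    have key: "a \<notin> w - {t} \<and> w - {t} \<subseteq> D" if av: "a \<in> v" and hb: "card (D - {a} - w) = 1" for a
    proof -
      have "card (w - (D - {a})) = 1" using hb diff_sym[of w "D - {a}"] fw fD cAi[OF av] cw by simp
      then obtain z where z: "w - (D - {a}) = {z}" by (rule card_1_singletonE)
      have "t \<in> w - (D - {a})" using t by simp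
      then have zt: "z = t" using z by simp
      show ?thesis using z zt unfolding diff_single by auto
    qed
    have "w - {t} \<subseteq> D - {a1, a2, a3}"
      using key[OF a(1) h1[unfolded Ai[OF a(1)]]] key[OF a(2) h2[unfolded Ai[OF a(2)]]]
        key[OF a(3) h3[unfolded Ai[OF a(3)]]] by blast
    then have le: "card (w - {t}) \<le> card (D - {a1, a2, a3})" using fD by (simp add: card_mono)
    have "{a1, a2, a3} \<subseteq> D" using a D_def by auto
    then have "card (D - {a1, a2, a3}) = card D - 3" using fD d by (simp add: card_Diff_subset)
    moreover have "card (w - {t}) = card v - 1" using t fw cw by simp
    moreover have "card v \<ge> 3"
    proof -
      have "{a1, a2, a3} \<subseteq> v" using a by simp
      then have "card {a1, a2, a3} \<le> card v" using fv card_mono by blast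
      then show ?thesis using d by simp
    qed
    ultimately show False using le cD by simp
  qed
  show ?thesis
  proof (cases "card (insert b0 (v - {a4}) - w) = 1")
    case True then show ?thesis by simp
  next
    case False
    have "card (w - (D - {a4})) \<noteq> 1" using False Ai[OF a(4)] diff_sym[of w "D - {a4}"] fw fD cAi[OF a(4)] cw by simp
    moreover have "w - (D - {a4}) \<subseteq> {a4}" using sub by blast
    ultimately have s: "w \<subseteq> D - {a4}" using fw sub_single_card by metis
    have "w = D - {a4}" using card_subset_eq[OF _ s] fD cAi[OF a(4)] cw by simp
    then show ?thesis using Ai[OF a(4)] by simp
  qed
qed

lemma five:
  assumes "card AA = 5"
  shows "\<exists>A1 A2 A3 A4 A5. A1 \<in> AA \<and> A2 \<in> AA \<and> A3 \<in> AA \<and> A4 \<in> AA \<and> A5 \<in> AA \<and>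
    distinct [A1, A2, A3, A4, A5]"
proof -
  have "card AA = Suc (Suc (Suc (Suc (Suc 0))))" using assms by simp
  then obtain A1 B1 where 1: "AA = insert A1 B1" "A1 \<notin> B1" "card B1 = Suc (Suc (Suc (Suc 0)))"
    using card_eq_SucD by metis
  then obtain A2 B2 where 2: "B1 = insert A2 B2" "A2 \<notin> B2" "card B2 = Suc (Suc (Suc 0))"
    using card_eq_SucD by metis
  then obtain A3 B3 where 3: "B2 = insert A3 B3" "A3 \<notin> B3" "card B3 = Suc (Suc 0)"
    using card_eq_SucD by metis
  then obtain A4 B4 where 4: "B3 = insert A4 B4" "A4 \<notin> B4" "card B4 = Suc 0"
    using card_eq_SucD by metis
  then obtain A5 where 5: "B4 = {A5}"
    using card_1_singletonE by (metis One_nat_def)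
  show ?thesis apply (rule exI[of _ A1], rule exI[of _ A2], rule exI[of _ A3], rule exI[of _ A4], rule exI[of _ A5])
    using 1 2 3 4 5 by simp
qed

lemma diff2:
  assumes "a1 \<in> v" "b1 \<notin> v" "a2 \<in> v" "b2 \<notin> v" "a1 \<noteq> a2" "b1 \<noteq> b2"
  shows "card (insert b1 (v - {a1}) - insert b2 (v - {a2})) = 2"
proof -
  have "insert b1 (v - {a1}) - insert b2 (v - {a2}) = {b1, a2}" using assms by auto
  moreover have "b1 \<noteq> a2" using assms by auto
  ultimately show ?thesis by simp
qed

lemma core:
  fixes X :: "'a set" and k :: nat and AA :: "'a set set"
  assumes finX: "finite X"
    and AAsub: "\<forall>B\<in>AA. B \<subseteq> X \<and> card B = k" and cardAA: "card AA = 5"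
    and H: "\<forall>T. T \<subseteq> AA \<longrightarrow> (\<exists>w. w \<subseteq> X \<and> card w = k \<and> (\<forall>B\<in>AA. johnson_adj k w B \<longleftrightarrow> B \<in> T))"
  shows False
proof -
  have finAA: "finite AA" using cardAA card.infinite by force
  have finB: "\<And>B. B \<in> AA \<Longrightarrow> finite B" using AAsub finX finite_subset by blast
  have cardB: "\<And>B. B \<in> AA \<Longrightarrow> card B = k" using AAsub by blast
  have finW: "\<And>w. w \<subseteq> X \<Longrightarrow> finite w" using finX finite_subset by blast
  have adjE: "\<And>w B. w \<subseteq> X \<Longrightarrow> card w = k \<Longrightarrow> B \<in> AA \<Longrightarrow> johnson_adj k w B \<longleftrightarrow> card (B - w) = 1"
    using adj_iff finB cardB finW by metis
  have symE: "\<And>w B. w \<subseteq> X \<Longrightarrow> card w = k \<Longrightarrow> B \<in> AA \<Longrightarrow> card (B - w) = card (w - B)"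
    using diff_sym finB cardB finW by metis
  obtain v0 where v0X: "v0 \<subseteq> X" and v0k: "card v0 = k" and v0a: "\<forall>B\<in>AA. johnson_adj k v0 B"
    using H[rule_format, OF order_refl] by blast
  have finv0: "finite v0" using v0X finW by blast
  have "\<forall>B\<in>AA. \<exists>a b. a \<in> v0 \<and> b \<notin> v0 \<and> B = insert b (v0 - {a})"
  proof
    fix B assume B: "B \<in> AA"
    have "card (B - v0) = 1" using adjE[OF v0X v0k B] v0a B by blast
    then show "\<exists>a b. a \<in> v0 \<and> b \<notin> v0 \<and> B = insert b (v0 - {a})"
      using rep[OF finB[OF B] finv0] cardB[OF B] v0k by metis
  qed
  then obtain fa fb where fab: "\<forall>B\<in>AA. fa B \<in> v0 \<and> fb B \<notin> v0 \<and> B = insert (fb B) (v0 - {fa B})"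
    by metis
  have inj_ab: "\<And>B C. B \<in> AA \<Longrightarrow> C \<in> AA \<Longrightarrow> fa B = fa C \<Longrightarrow> fb B = fb C \<Longrightarrow> B = C"
    using fab by metis
  have step2: "fa B = fa C \<or> fb B = fb C" if B: "B \<in> AA" and C: "C \<in> AA" and BC: "B \<noteq> C" for B C
  proof (rule ccontr)
    assume n: "\<not> (fa B = fa C \<or> fb B = fb C)"
    have cBC: "card (B - C) = 2" using diff2[of "fa B" v0 "fb B" "fa C" "fb C"] fab B C n by metis
    have cCB: "card (C - B) = 2" using diff2[of "fa C" v0 "fb C" "fa B" "fb B"] fab B C n by metis
    define R where "R = AA - {B, C}"
    have finR: "finite R" using finAA R_def by simp
    have cR: "card R = 3" using cardAA B C BC finAA R_def by (simp add: card_Diff_subset)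
    have ex: "\<forall>T'\<in>Pow R. \<exists>w. w \<subseteq> X \<and> card w = k \<and> (\<forall>D\<in>AA. johnson_adj k w D \<longleftrightarrow> D \<in> insert B (insert C T'))"
    proof
      fix T' assume "T' \<in> Pow R"
      then have "insert B (insert C T') \<subseteq> AA" using B C R_def by auto
      then show "\<exists>w. w \<subseteq> X \<and> card w = k \<and> (\<forall>D\<in>AA. johnson_adj k w D \<longleftrightarrow> D \<in> insert B (insert C T'))"
        using H by presburger
    qed
    then obtain \<Phi> where \<Phi>: "\<forall>T'\<in>Pow R. \<Phi> T' \<subseteq> X \<and> card (\<Phi> T') = k \<and> (\<forall>D\<in>AA. johnson_adj k (\<Phi> T') D \<longleftrightarrow> D \<in> insert B (insert C T'))"
      using bchoice[OF ex] by blast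
    have inj: "inj_on \<Phi> (Pow R)"
    proof (rule inj_onI)
      fix T1 T2 assume T1: "T1 \<in> Pow R" and T2: "T2 \<in> Pow R" and eq: "\<Phi> T1 = \<Phi> T2"
      show "T1 = T2"
      proof (rule set_eqI)
        fix D
        show "D \<in> T1 \<longleftrightarrow> D \<in> T2"
        proof (cases "D \<in> R")
          case True
          then have "D \<in> AA" "D \<noteq> B" "D \<noteq> C" using R_def by auto
          then show ?thesis using \<Phi> T1 T2 eq by (metis insert_iff)
        next
          case False then show ?thesis using T1 T2 by auto
        qed
      qed
    qed
    define Cand where "Cand = (\<lambda>(a, b). insert b (B - {a})) ` ((B - C) \<times> (C - B))"
    have finBC: "finite ((B - C) \<times> (C - B))" using finB[OF B] finB[OF C] by simp
    have cCand: "card Cand \<le> 4"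
    proof -
      have "card Cand \<le> card ((B - C) \<times> (C - B))" unfolding Cand_def using finBC card_image_le by blast
      also have "\<dots> = 4" using cBC cCB by (simp add: card_cartesian_product)
      finally show ?thesis .
    qed
    have sub: "\<Phi> ` Pow R \<subseteq> Cand"
    proof
      fix w assume "w \<in> \<Phi> ` Pow R"
      then obtain T' where T': "T' \<in> Pow R" and w: "w = \<Phi> T'" by blast
      have wX: "w \<subseteq> X" and wk: "card w = k" using \<Phi> T' w by auto
      have "johnson_adj k w B" "johnson_adj k w C" using \<Phi> T' w B C by auto
      then have 1: "card (B - w) = 1" "card (C - w) = 1" using adjE[OF wX wk] B C by auto
      then have 2: "card (w - B) = 1" "card (w - C) = 1" using symE[OF wX wk] B C by auto
      obtain a b where "a \<in> B - C" "b \<in> C - B" "w = insert b (B - {a})"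
        using common_nb[OF finB[OF B] finB[OF C] finW[OF wX] cBC cCB 1(1) 2(1) 2(2) 1(2)] by blast
      then show "w \<in> Cand" unfolding Cand_def by force
    qed
    have "card (Pow R) \<le> card Cand"
      using card_inj_on_le[OF inj sub] finBC Cand_def by simp
    moreover have "card (Pow R) = 8" using finR cR by (simp add: card_Pow)
    ultimately show False using cCand by simp
  qed
  obtain A1 A2 A3 A4 A5 where A: "A1 \<in> AA" "A2 \<in> AA" "A3 \<in> AA" "A4 \<in> AA" "A5 \<in> AA"
    and dA: "distinct [A1, A2, A3, A4, A5]"
    using five[OF cardAA] by blast
  have star: "(\<forall>C\<in>AA. fa C = fa A1) \<or> (\<forall>C\<in>AA. fb C = fb A1)"
  proof (cases "fa A1 = fa A2")
    case True
    have "A1 \<noteq> A2" using dA by simp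
    then have nb: "fb A1 \<noteq> fb A2" using inj_ab[OF A(1) A(2) True] by blast
    have "\<forall>C\<in>AA. fa C = fa A1"
    proof
      fix C assume C: "C \<in> AA"
      show "fa C = fa A1"
      proof (rule ccontr)
        assume ne: "fa C \<noteq> fa A1"
        then have "C \<noteq> A1" "C \<noteq> A2" using True by auto
        then have "fa C = fa A1 \<or> fb C = fb A1" "fa C = fa A2 \<or> fb C = fb A2"
          using step2[OF C A(1)] step2[OF C A(2)] by blast+
        then have "fb C = fb A1" "fb C = fb A2" using ne True by simp_all
        then show False using nb by simp
      qed
    qed
    then show ?thesis ..
  next
    case False
    have "A1 \<noteq> A2" using dA by simp
    then have eb: "fb A1 = fb A2" using step2[OF A(1) A(2)] False by blast
    have "\<forall>C\<in>AA. fb C = fb A1"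
    proof
      fix C assume C: "C \<in> AA"
      show "fb C = fb A1"
      proof (rule ccontr)
        assume ne: "fb C \<noteq> fb A1"
        then have "C \<noteq> A1" "C \<noteq> A2" using eb by auto
        then have "fa C = fa A1 \<or> fb C = fb A1" "fa C = fa A2 \<or> fb C = fb A2"
          using step2[OF C A(1)] step2[OF C A(2)] by blast+
        then have "fa C = fa A1" "fa C = fa A2" using ne eb by simp_all
        then show False using False by simp
      qed
    qed
    then show ?thesis ..
  qed
  have T3: "{A1, A2, A3} \<subseteq> AA" using A by simp
  obtain w where wX: "w \<subseteq> X" and wk: "card w = k"
    and wadj: "\<forall>B\<in>AA. johnson_adj k w B \<longleftrightarrow> B \<in> {A1, A2, A3}"
    using H[rule_format, OF T3] by blast
  have fw: "finite w" using wX finW by blast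
  have cw: "card w = card v0" using wk v0k by simp
  have h: "card (A1 - w) = 1" "card (A2 - w) = 1" "card (A3 - w) = 1"
    using wadj[rule_format, OF A(1)] adjE[OF wX wk A(1)] wadj[rule_format, OF A(2)] adjE[OF wX wk A(2)]
      wadj[rule_format, OF A(3)] adjE[OF wX wk A(3)] by simp_all
  have "A4 \<notin> {A1, A2, A3}" "A5 \<notin> {A1, A2, A3}" using dA by auto
  then have n: "card (A4 - w) \<noteq> 1" "card (A5 - w) \<noteq> 1"
    using wadj[rule_format, OF A(4)] adjE[OF wX wk A(4)] wadj[rule_format, OF A(5)] adjE[OF wX wk A(5)]
    by simp_all
  have fa_in: "\<And>C. C \<in> AA \<Longrightarrow> fa C \<in> v0" and fb_out: "\<And>C. C \<in> AA \<Longrightarrow> fb C \<notin> v0"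
    and Ceq: "\<And>C. C \<in> AA \<Longrightarrow> insert (fb C) (v0 - {fa C}) = C"
    using fab by metis+
  from star show False
  proof
    assume all: "\<forall>C\<in>AA. fa C = fa A1"
    have e: "\<And>C. C \<in> AA \<Longrightarrow> insert (fb C) (v0 - {fa A1}) = C" using Ceq all by metis
    have gen: "\<And>C D. C \<in> AA \<Longrightarrow> D \<in> AA \<Longrightarrow> C \<noteq> D \<Longrightarrow> fb C \<noteq> fb D" using inj_ab all by metis
    have db: "fb A1 \<noteq> fb A2" "fb A1 \<noteq> fb A3" "fb A2 \<noteq> fb A3"
      using gen[OF A(1) A(2)] gen[OF A(1) A(3)] gen[OF A(2) A(3)] dA by simp_all
    have r4: "card (insert (fb A4) (v0 - {fa A1}) - w) = 1 \<or> insert (fb A4) (v0 - {fa A1}) = w"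
      by (rule caseA[OF finv0 fa_in[OF A(1)] fb_out[OF A(1)] fb_out[OF A(2)] fb_out[OF A(3)] fb_out[OF A(4)]
            db fw cw]) (simp_all only: e A h)
    have r5: "card (insert (fb A5) (v0 - {fa A1}) - w) = 1 \<or> insert (fb A5) (v0 - {fa A1}) = w"
      by (rule caseA[OF finv0 fa_in[OF A(1)] fb_out[OF A(1)] fb_out[OF A(2)] fb_out[OF A(3)] fb_out[OF A(5)]
            db fw cw]) (simp_all only: e A h)
    have "A4 = w" using r4 n unfolding e[OF A(4)] by simp
    moreover have "A5 = w" using r5 n unfolding e[OF A(5)] by simp
    ultimately show False using dA by simp
  next
    assume all: "\<forall>C\<in>AA. fb C = fb A1"
    have e: "\<And>C. C \<in> AA \<Longrightarrow> insert (fb A1) (v0 - {fa C}) = C" using Ceq all by metis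
    have gen: "\<And>C D. C \<in> AA \<Longrightarrow> D \<in> AA \<Longrightarrow> C \<noteq> D \<Longrightarrow> fa C \<noteq> fa D" using inj_ab all by metis
    have da: "fa A1 \<noteq> fa A2" "fa A1 \<noteq> fa A3" "fa A2 \<noteq> fa A3"
      using gen[OF A(1) A(2)] gen[OF A(1) A(3)] gen[OF A(2) A(3)] dA by simp_all
    have r4: "card (insert (fb A1) (v0 - {fa A4}) - w) = 1 \<or> insert (fb A1) (v0 - {fa A4}) = w"
      by (rule caseB[OF finv0 fb_out[OF A(1)] fa_in[OF A(1)] fa_in[OF A(2)] fa_in[OF A(3)] fa_in[OF A(4)]
            da fw cw]) (simp_all only: e A h)
    have r5: "card (insert (fb A1) (v0 - {fa A5}) - w) = 1 \<or> insert (fb A1) (v0 - {fa A5}) = w"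
      by (rule caseB[OF finv0 fb_out[OF A(1)] fa_in[OF A(1)] fa_in[OF A(2)] fa_in[OF A(3)] fa_in[OF A(5)]
            da fw cw]) (simp_all only: e A h)
    have "A4 = w" using r4 n unfolding e[OF A(4)] by simp
    moreover have "A5 = w" using r5 n unfolding e[OF A(5)] by simp
    ultimately show False using dA by simp
  qed
qed

theorem mainTheorem7:
  fixes X :: "'a set" and m k :: nat
  assumes "finite X" and "card X = m" and "k \<le> m"
  shows "edge_vc_dim (johnson_vertices X k) (johnson_adj k) \<le> 4"
proof -
  define V where "V = johnson_vertices X k"
  define F where "F = nbhd V (johnson_adj k) ` V"
  have "\<forall>A. A \<subseteq> V \<and> finite A \<and> shatters F A \<longrightarrow> card A \<le> 4"
  proof (intro allI impI)
    fix A assume A: "A \<subseteq> V \<and> finite A \<and> shatters F A"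
    show "card A \<le> 4"
    proof (rule ccontr)
      assume "\<not> card A \<le> 4"
      then have "5 \<le> card A" by simp
      then obtain AA where AAA: "AA \<subseteq> A" and cAA: "card AA = 5"
        using obtain_subset_with_card_n by metis
      have AAsub: "\<forall>B\<in>AA. B \<subseteq> X \<and> card B = k"
        using AAA A unfolding V_def johnson_vertices_def by blast
      have Hh: "\<forall>T. T \<subseteq> AA \<longrightarrow> (\<exists>w. w \<subseteq> X \<and> card w = k \<and> (\<forall>B\<in>AA. johnson_adj k w B \<longleftrightarrow> B \<in> T))"
      proof (intro allI impI)
        fix T assume T: "T \<subseteq> AA"
        then have "T \<in> Pow A" using AAA by blast
        then have "T \<in> {A \<inter> S | S. S \<in> F}" using A unfolding shatters_def by simp
        then obtain w where wV: "w \<in> V" and TS: "T = A \<inter> nbhd V (johnson_adj k) w"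
          unfolding F_def by blast
        have "\<forall>B\<in>AA. johnson_adj k w B \<longleftrightarrow> B \<in> T"
          using TS AAA A unfolding nbhd_def by blast
        moreover have "w \<subseteq> X \<and> card w = k" using wV unfolding V_def johnson_vertices_def by simp
        ultimately show "\<exists>w. w \<subseteq> X \<and> card w = k \<and> (\<forall>B\<in>AA. johnson_adj k w B \<longleftrightarrow> B \<in> T)"
          by blast
      qed
      show False using core[OF assms(1) AAsub cAA Hh] .
    qed
  qed
  then have "\<forall>x \<in> {enat (card A) | A. A \<subseteq> V \<and> finite A \<and> shatters F A}. x \<le> 4"
    by (auto simp: numeral_eq_enat)
  then show ?thesis unfolding edge_vc_dim_def vc_dim_def V_def[symmetric] F_def[symmetric]
    by (simp add: Sup_le_iff)
qed

end
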